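(* Let $A$ be a $\mathbb{Q}$-domain, $K=\operatorname{frac}(A)$, $B=A^{[n]}$ and $D\in \operatorname{LND}_A(B)$. Let $D_K$ denote the extension of $D$ to $K\otimes_A B=K^{[n]}$. Assume that $\operatorname{rank} D=\operatorname{rank} D_K$. If $D_K$ is rigid, then $D$ is rigid.
   Context: All rings are commutative integral domains containing $\mathbb{Q}$. For a ring $A$, $A^{[n]}$ denotes an $A$-algebra isomorphic to the polynomial ring in $n$ variables over $A$. If $B=A^{[n]}$, a coordinate system of $B$ over $A$ is an ordered $n$-tuple $(X_1,\dots,X_n)$ of elements of $B$ with $A[X_1,\dots,X_n]=B$; $\Gamma(B)$ denotes the set of all such. An $A$-derivation $D$ of $B$ is locally nilpotent if for every $x\in B$ there is $s>0$ with $D^s(x)=0$; $\operatorname{LND}_A(B)$ is the set of locally nilpotent $A$-derivations of $B$. The rank of $D$ is the least integer $r\ge 0$ such that there is a coordinate system $(X_1,\dots,X_n)$ of $B$ over $A$ with $A[X_1,\dots,X_{n-r}]\subset\ker D$. For $D$ of rank $r$, $\Gamma_D(B)$ is the set of $(X_1,\dots,X_n)\in\Gamma(B)$ with $A[X_1,\dots,X_{n-r}]\subset \ker D$. $D$ is rigid if $A[X_1,\dots,X_{n-r}]=A[X_1',\dots,X_{n-r}']$ whenever $(X_1,\dots,X_n)$ and $(X_1',\dots,X_n')$ both belong to $\Gamma_D(B)$. (The same definitions apply over $K$ to $D_K$.) *)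

theory Defs
  imports Complex_Main
begin

text \<open>Everything lives inside an ambient field F (type 'a).  Multi-indices are functions nat \<Rightarrow> nat; a "coordinate
  tuple" is X :: nat \<Rightarrow> 'a, only X 0, ..., X (n-1) matter
  (the paper's X_1..X_n are our X 0 .. X (n-1)).\<close>

definition is_subring :: "'a::field set \<Rightarrow> bool" where
  "is_subring R \<longleftrightarrow> 0 \<in> R \<and> 1 \<in> R \<and> (\<forall>x\<in>R. \<forall>y\<in>R. x + y \<in> R \<and> x - y \<in> R \<and> x * y \<in> R)"

definition monom :: "(nat \<Rightarrow> 'a::field) \<Rightarrow> nat \<Rightarrow> (nat \<Rightarrow> nat) \<Rightarrow> 'a" where
  "monom X k \<alpha> = (\<Prod>i<k. X i ^ \<alpha> i)"

definition mindices :: "nat \<Rightarrow> (nat \<Rightarrow> nat) set" where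
  "mindices k = {\<alpha>. \<forall>i\<ge>k. \<alpha> i = 0}"

definition alg_span :: "'a::field set \<Rightarrow> (nat \<Rightarrow> 'a) \<Rightarrow> nat \<Rightarrow> 'a set" where
  "alg_span R X k = {z. \<exists>S c. finite S \<and> S \<subseteq> mindices k \<and> (\<forall>\<alpha>\<in>S. c \<alpha> \<in> R) \<and>
      z = (\<Sum>\<alpha>\<in>S. c \<alpha> * monom X k \<alpha>)}"

definition alg_indep :: "'a::field set \<Rightarrow> (nat \<Rightarrow> 'a) \<Rightarrow> nat \<Rightarrow> bool" where
  "alg_indep R X k \<longleftrightarrow> (\<forall>S c. finite S \<and> S \<subseteq> mindices k \<and> (\<forall>\<alpha>\<in>S. c \<alpha> \<in> R) \<and>
      (\<Sum>\<alpha>\<in>S. c \<alpha> * monom X k \<alpha>) = 0 \<longrightarrow> (\<forall>\<alpha>\<in>S. c \<alpha> = 0))"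

definition coord_sys :: "'a::field set \<Rightarrow> 'a set \<Rightarrow> nat \<Rightarrow> (nat \<Rightarrow> 'a) \<Rightarrow> bool" where
  "coord_sys R B n X \<longleftrightarrow> alg_span R X n = B \<and> alg_indep R X n"

definition is_lnd :: "'a::field set \<Rightarrow> 'a set \<Rightarrow> ('a \<Rightarrow> 'a) \<Rightarrow> bool" where
  "is_lnd R B D \<longleftrightarrow> (\<forall>x\<in>B. D x \<in> B) \<and>
     (\<forall>x\<in>B. \<forall>y\<in>B. D (x + y) = D x + D y \<and> D (x * y) = x * D y + y * D x) \<and>
     (\<forall>a\<in>R. D a = 0) \<and>
     (\<forall>x\<in>B. \<exists>s>0. (D ^^ s) x = 0)"

definition ker_on :: "'a set \<Rightarrow> ('a \<Rightarrow> 'a::zero) \<Rightarrow> 'a set" where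
  "ker_on B D = {x\<in>B. D x = 0}"

definition lnd_rank :: "'a::field set \<Rightarrow> 'a set \<Rightarrow> nat \<Rightarrow> ('a \<Rightarrow> 'a) \<Rightarrow> nat" where
  "lnd_rank R B n D = (LEAST r. \<exists>X. coord_sys R B n X \<and> alg_span R X (n - r) \<subseteq> ker_on B D)"

definition Gamma_D :: "'a::field set \<Rightarrow> 'a set \<Rightarrow> nat \<Rightarrow> ('a \<Rightarrow> 'a) \<Rightarrow> (nat \<Rightarrow> 'a) set" where
  "Gamma_D R B n D = {X. coord_sys R B n X \<and> alg_span R X (n - lnd_rank R B n D) \<subseteq> ker_on B D}"

definition rigid :: "'a::field set \<Rightarrow> 'a set \<Rightarrow> nat \<Rightarrow> ('a \<Rightarrow> 'a) \<Rightarrow> bool" where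
  "rigid R B n D \<longleftrightarrow> (\<forall>X\<in>Gamma_D R B n D. \<forall>Y\<in>Gamma_D R B n D.
      alg_span R X (n - lnd_rank R B n D) = alg_span R Y (n - lnd_rank R B n D))"

text \<open>Fraction field of A inside the ambient field, and K \<otimes>_A B = S^{-1} B, S = A - {0}.\<close>
definition frac_set :: "'a::field set \<Rightarrow> 'a set" where
  "frac_set A = {a / s | a s. a \<in> A \<and> s \<in> A \<and> s \<noteq> 0}"

definition loc_set :: "'a::field set \<Rightarrow> 'a set \<Rightarrow> 'a set" where
  "loc_set A B = {b / s | b s. b \<in> B \<and> s \<in> A \<and> s \<noteq> 0}"

definition frac_ext :: "'a::field set \<Rightarrow> 'a set \<Rightarrow> ('a \<Rightarrow> 'a) \<Rightarrow> 'a \<Rightarrow> 'a" where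
  "frac_ext A B D z = (SOME w. \<exists>b s. b \<in> B \<and> s \<in> A \<and> s \<noteq> 0 \<and> z = b / s \<and> w = D b / s)"

end

theory Submission
  imports Defs
begin

lemma sub_mult: "is_subring A \<Longrightarrow> x \<in> A \<Longrightarrow> y \<in> A \<Longrightarrow> x * y \<in> A"
  by (simp add: is_subring_def)
lemma sub_diff: "is_subring A \<Longrightarrow> x \<in> A \<Longrightarrow> y \<in> A \<Longrightarrow> x - y \<in> A"
  by (simp add: is_subring_def)
lemma sub_0: "is_subring A \<Longrightarrow> 0 \<in> A" by (simp add: is_subring_def)
lemma sub_1: "is_subring A \<Longrightarrow> 1 \<in> A" by (simp add: is_subring_def)

lemma monom_mono:
  assumes "\<beta> \<in> mindices k" "k \<le> n"
  shows "monom X n \<beta> = monom X k \<beta>"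
proof -
  have "(\<Prod>i<n. X i ^ \<beta> i) = (\<Prod>i<k. X i ^ \<beta> i)"
    by (rule prod.mono_neutral_right) (use assms in \<open>auto simp: mindices_def\<close>)
  thus ?thesis by (simp add: monom_def)
qed

lemma span_I:
  assumes "finite S" "S \<subseteq> mindices k" "\<forall>\<alpha>\<in>S. c \<alpha> \<in> R"
    "z = (\<Sum>\<alpha>\<in>S. c \<alpha> * monom X k \<alpha>)"
  shows "z \<in> alg_span R X k"
  unfolding alg_span_def using assms by (intro CollectI exI[of _ S] exI[of _ c]) simp

lemma span_E:
  assumes "z \<in> alg_span R X k"
  obtains S c where "finite S" "S \<subseteq> mindices k" "\<forall>\<alpha>\<in>S. c \<alpha> \<in> R"
    "z = (\<Sum>\<alpha>\<in>S. c \<alpha> * monom X k \<alpha>)"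
  using assms unfolding alg_span_def by blast

lemma A_sub_frac: "is_subring A \<Longrightarrow> a \<in> A \<Longrightarrow> a \<in> frac_set A"
  unfolding frac_set_def by (rule CollectI, rule exI[of _ a], rule exI[of _ 1]) (simp add: sub_1)

lemma clear_denom:
  assumes "is_subring A" "finite S" "\<forall>\<alpha>\<in>S. c \<alpha> \<in> frac_set A"
  shows "\<exists>s\<in>A. s \<noteq> 0 \<and> (\<forall>\<alpha>\<in>S. s * c \<alpha> \<in> A)"
  using assms(2,3)
proof (induction S rule: finite_induct)
  case empty
  then show ?case using sub_1[OF assms(1)] by (intro bexI[of _ 1]) auto
next
  case (insert x F)
  then obtain s where s: "s \<in> A" "s \<noteq> 0" "\<forall>\<alpha>\<in>F. s * c \<alpha> \<in> A" by auto
  from insert obtain a t where at: "a \<in> A" "t \<in> A" "t \<noteq> 0" "c x = a / t"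
    unfolding frac_set_def by auto
  have "s * t \<in> A" using s at assms(1) by (simp add: sub_mult)
  moreover have "s * t \<noteq> 0" using s at by simp
  moreover have "\<forall>\<alpha>\<in>insert x F. s * t * c \<alpha> \<in> A"
  proof
    fix \<alpha> assume "\<alpha> \<in> insert x F"
    then show "s * t * c \<alpha> \<in> A"
    proof
      assume "\<alpha> = x"
      then have "s * t * c \<alpha> = s * a" using at by simp
      then show ?thesis using sub_mult[OF assms(1) s(1) at(1)] by (simp only:)
    next
      assume "\<alpha> \<in> F"
      then have "s * c \<alpha> \<in> A" using s by auto
      then have "t * (s * c \<alpha>) \<in> A" using at assms(1) by (simp add: sub_mult)
      then show ?thesis by (simp add: ac_simps)
    qed
  qed
  ultimately show ?case by blast
qed

lemma span_frac:
  assumes "is_subring A" "z \<in> alg_span (frac_set A) X k"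
  shows "\<exists>b\<in>alg_span A X k. \<exists>s\<in>A. s \<noteq> 0 \<and> z = b / s"
proof -
  obtain S c where S: "finite S" "S \<subseteq> mindices k" "\<forall>\<alpha>\<in>S. c \<alpha> \<in> frac_set A"
    and z: "z = (\<Sum>\<alpha>\<in>S. c \<alpha> * monom X k \<alpha>)"
    using assms(2) by (rule span_E)
  obtain s where s: "s \<in> A" "s \<noteq> 0" "\<forall>\<alpha>\<in>S. s * c \<alpha> \<in> A"
    using clear_denom[OF assms(1) S(1) S(3)] by auto
  have "s * z = (\<Sum>\<alpha>\<in>S. (s * c \<alpha>) * monom X k \<alpha>)"
    unfolding z by (simp add: sum_distrib_left ac_simps)
  hence "s * z \<in> alg_span A X k" using S s by (intro span_I[of S _ "\<lambda>\<alpha>. s * c \<alpha>"]) auto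
  moreover have "z = (s * z) / s" using s by simp
  ultimately show ?thesis using s by blast
qed

lemma span_loc:
  assumes "is_subring A" "b \<in> alg_span A X k" "s \<in> A" "s \<noteq> 0"
  shows "b / s \<in> alg_span (frac_set A) X k"
proof -
  obtain S c where S: "finite S" "S \<subseteq> mindices k" "\<forall>\<alpha>\<in>S. c \<alpha> \<in> A"
    and b: "b = (\<Sum>\<alpha>\<in>S. c \<alpha> * monom X k \<alpha>)"
    using assms(2) by (rule span_E)
  have "b / s = (\<Sum>\<alpha>\<in>S. (c \<alpha> / s) * monom X k \<alpha>)"
    unfolding b by (simp add: sum_divide_distrib)
  moreover have "\<forall>\<alpha>\<in>S. c \<alpha> / s \<in> frac_set A" using S assms unfolding frac_set_def by blast
  ultimately show ?thesis using S by (intro span_I[of S _ "\<lambda>\<alpha>. c \<alpha> / s"]) auto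
qed

lemma indep_frac:
  assumes "is_subring A" "alg_indep A X k"
  shows "alg_indep (frac_set A) X k"
  unfolding alg_indep_def
proof (intro allI impI)
  fix S c assume H: "finite S \<and> S \<subseteq> mindices k \<and> (\<forall>\<alpha>\<in>S. c \<alpha> \<in> frac_set A) \<and>
      (\<Sum>\<alpha>\<in>S. c \<alpha> * monom X k \<alpha>) = 0"
  obtain s where s: "s \<in> A" "s \<noteq> 0" "\<forall>\<alpha>\<in>S. s * c \<alpha> \<in> A"
    using clear_denom[OF assms(1)] H by blast
  have "(\<Sum>\<alpha>\<in>S. (s * c \<alpha>) * monom X k \<alpha>) = s * (\<Sum>\<alpha>\<in>S. c \<alpha> * monom X k \<alpha>)"
    by (simp add: sum_distrib_left ac_simps)
  also have "\<dots> = 0" using H by simp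
  finally have e0: "(\<Sum>\<alpha>\<in>S. (s * c \<alpha>) * monom X k \<alpha>) = 0" .
  have "\<forall>\<alpha>\<in>S. s * c \<alpha> = 0"
    using assms(2)[unfolded alg_indep_def, rule_format, of S "\<lambda>\<alpha>. s * c \<alpha>"] H s e0 by blast
  thus "\<forall>\<alpha>\<in>S. c \<alpha> = 0" using s by simp
qed

lemma coord_frac:
  assumes "is_subring A" "coord_sys A B n X"
  shows "coord_sys (frac_set A) (loc_set A B) n X"
proof -
  have sp: "alg_span A X n = B" and ind: "alg_indep A X n"
    using assms(2) unfolding coord_sys_def by auto
  have "alg_span (frac_set A) X n = loc_set A B"
  proof
    show "alg_span (frac_set A) X n \<subseteq> loc_set A B"
      using span_frac[OF assms(1)] sp unfolding loc_set_def by blast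
    show "loc_set A B \<subseteq> alg_span (frac_set A) X n"
      using span_loc[OF assms(1)] sp unfolding loc_set_def by blast
  qed
  thus ?thesis using indep_frac[OF assms(1) ind] unfolding coord_sys_def by simp
qed

lemma const_in_span:
  assumes "a \<in> A" shows "a \<in> alg_span A X k"
proof -
  have "a = (\<Sum>\<alpha>\<in>{\<lambda>_. 0}. (\<lambda>_. a) \<alpha> * monom X k \<alpha>)" by (simp add: monom_def)
  moreover have "{\<lambda>_. 0} \<subseteq> mindices k" by (simp add: mindices_def)
  ultimately show ?thesis using assms by (intro span_I[of "{\<lambda>_. 0}" _ "\<lambda>_. a"]) auto
qed

lemma span_mono_k:
  assumes "k \<le> n" shows "alg_span A X k \<subseteq> alg_span A X n"
proof
  fix z assume "z \<in> alg_span A X k"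
  then obtain S c where S: "finite S" "S \<subseteq> mindices k" "\<forall>\<alpha>\<in>S. c \<alpha> \<in> A"
    and z: "z = (\<Sum>\<alpha>\<in>S. c \<alpha> * monom X k \<alpha>)"
    by (rule span_E)
  have "z = (\<Sum>\<alpha>\<in>S. c \<alpha> * monom X n \<alpha>)"
    proof -
    have "\<forall>\<alpha>\<in>S. monom X n \<alpha> = monom X k \<alpha>" using S(2) monom_mono[OF _ assms] by blast
    thus ?thesis unfolding z by simp
  qed
  moreover have "S \<subseteq> mindices n" using S(2) assms unfolding mindices_def by auto
  ultimately show "z \<in> alg_span A X n" using S by (intro span_I[of S _ c]) auto
qed

lemma span_A_K:
  assumes "is_subring A" shows "alg_span A X k \<subseteq> alg_span (frac_set A) X k"
proof
  fix z assume "z \<in> alg_span A X k"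
  have "z / 1 \<in> alg_span (frac_set A) X k"
    by (rule span_loc[OF assms \<open>z \<in> alg_span A X k\<close> sub_1[OF assms] one_neq_zero])
  thus "z \<in> alg_span (frac_set A) X k" by (simp only: div_by_1)
qed

lemma frac_ext_eq:
  assumes "is_lnd A B D" "A \<subseteq> B" "b \<in> B" "s \<in> A" "s \<noteq> 0"
  shows "frac_ext A B D (b / s) = D b / s"
proof -
  let ?P = "\<lambda>w. \<exists>b' s'. b' \<in> B \<and> s' \<in> A \<and> s' \<noteq> 0 \<and> b / s = b' / s' \<and> w = D b' / s'"
  have "?P (D b / s)" using assms by (intro exI[of _ b] exI[of _ s]) simp
  hence "?P (SOME w. ?P w)" by (rule someI)
  then obtain b' s' where H: "b' \<in> B" "s' \<in> A" "s' \<noteq> 0" "b / s = b' / s'"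
    and w: "(SOME w. ?P w) = D b' / s'" by blast
  have e: "b * s' = b' * s" using H(4) H(3) assms(5) by (simp add: field_simps)
  have d: "\<forall>x\<in>B. \<forall>y\<in>B. D (x * y) = x * D y + y * D x" and z: "\<forall>a\<in>A. D a = 0"
    using assms(1) unfolding is_lnd_def by auto
  have s'B: "s' \<in> B" and sB: "s \<in> B" using H(2) assms(2,4) by auto
  have "D (b * s') = b * D s' + s' * D b" using d assms(3) s'B by blast
  moreover have "D s' = 0" using z H(2) by blast
  ultimately have 1: "D (b * s') = s' * D b" by simp
  have "D (b' * s) = b' * D s + s * D b'" using d H(1) sB by blast
  moreover have "D s = 0" using z assms(4) by blast
  ultimately have 2: "D (b' * s) = s * D b'" by simp
  have "s' * D b = s * D b'" using 1 2 e by simp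
  hence "D b / s = D b' / s'" using H(3) assms(5) by (simp add: field_simps)
  thus ?thesis unfolding frac_ext_def using w by simp
qed

lemma key:
  assumes A: "is_subring A" and cs: "coord_sys A B n X" and kn: "k \<le> n"
    and yB: "y \<in> B" and yK: "y \<in> alg_span (frac_set A) X k"
  shows "y \<in> alg_span A X k"
proof -
  have sp: "alg_span A X n = B" and ind: "alg_indep A X n"
    using cs unfolding coord_sys_def by auto
  have yn: "y \<in> alg_span A X n" using yB sp by simp
  then obtain S a where S: "finite S" "S \<subseteq> mindices n" "\<forall>\<alpha>\<in>S. a \<alpha> \<in> A"
    and y: "y = (\<Sum>\<alpha>\<in>S. a \<alpha> * monom X n \<alpha>)"
    by (rule span_E)
  obtain b s where bs: "b \<in> alg_span A X k" "s \<in> A" "s \<noteq> 0" "y = b / s"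
    using span_frac[OF A yK] by blast
  obtain T c where T: "finite T" "T \<subseteq> mindices k" "\<forall>\<alpha>\<in>T. c \<alpha> \<in> A"
    and b: "b = (\<Sum>\<alpha>\<in>T. c \<alpha> * monom X k \<alpha>)"
    using bs(1) by (rule span_E)
  have b': "b = (\<Sum>\<alpha>\<in>T. c \<alpha> * monom X n \<alpha>)"
    proof -
    have "\<forall>\<alpha>\<in>T. monom X n \<alpha> = monom X k \<alpha>" using T(2) monom_mono[OF _ kn] by blast
    thus ?thesis unfolding b by simp
  qed
  have sy: "s * y = (\<Sum>\<alpha>\<in>S. (s * a \<alpha>) * monom X n \<alpha>)"
    unfolding y by (simp add: sum_distrib_left ac_simps)
  have sb: "s * y = b" using bs by simp
  define d where "d \<alpha> = (if \<alpha> \<in> S then s * a \<alpha> else 0) - (if \<alpha> \<in> T then c \<alpha> else 0)" for \<alpha>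
  have fin: "finite (S \<union> T)" using S T by auto
  have "(\<Sum>\<alpha>\<in>S \<union> T. d \<alpha> * monom X n \<alpha>)
      = (\<Sum>\<alpha>\<in>S \<union> T. (if \<alpha> \<in> S then s * a \<alpha> * monom X n \<alpha> else 0))
        - (\<Sum>\<alpha>\<in>S \<union> T. (if \<alpha> \<in> T then c \<alpha> * monom X n \<alpha> else 0))"
    unfolding d_def sum_subtractf[symmetric] by (intro sum.cong refl) (simp add: left_diff_distrib)
  also have "\<dots> = (\<Sum>\<alpha>\<in>S. s * a \<alpha> * monom X n \<alpha>) - (\<Sum>\<alpha>\<in>T. c \<alpha> * monom X n \<alpha>)"
  proof -
    have e1: "(S \<union> T) \<inter> S = S" "(S \<union> T) \<inter> T = T" by auto
    show ?thesis
      by (simp only: sum.inter_restrict[OF fin, symmetric] e1)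
  qed
  also have "\<dots> = 0" using sy sb b' by simp
  finally have sum0: "(\<Sum>\<alpha>\<in>S \<union> T. d \<alpha> * monom X n \<alpha>) = 0" .
  have dA: "\<forall>\<alpha>\<in>S \<union> T. d \<alpha> \<in> A"
    unfolding d_def using S T bs A by (auto simp: sub_mult sub_diff sub_0)
  have "S \<union> T \<subseteq> mindices n" using S T kn unfolding mindices_def by auto
  hence d0: "\<forall>\<alpha>\<in>S \<union> T. d \<alpha> = 0"
    using ind[unfolded alg_indep_def, rule_format, of "S \<union> T" d] fin dA sum0 by blast
  have a0: "\<forall>\<alpha>\<in>S - mindices k. a \<alpha> = 0"
  proof
    fix \<alpha> assume "\<alpha> \<in> S - mindices k"
    hence "\<alpha> \<in> S" "\<alpha> \<notin> T" using T by auto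
    hence "s * a \<alpha> = 0" using d0 unfolding d_def by force
    thus "a \<alpha> = 0" using bs by simp
  qed
  have "y = (\<Sum>\<alpha>\<in>S. (if \<alpha> \<in> mindices k then a \<alpha> * monom X n \<alpha> else 0))"
    unfolding y using a0 by (intro sum.cong) auto
  also have "\<dots> = (\<Sum>\<alpha>\<in>S \<inter> mindices k. a \<alpha> * monom X n \<alpha>)"
    using S(1) by (simp add: sum.inter_restrict)
  also have "\<dots> = (\<Sum>\<alpha>\<in>S \<inter> mindices k. a \<alpha> * monom X k \<alpha>)"
    proof -
    have "\<forall>\<alpha>\<in>S \<inter> mindices k. monom X n \<alpha> = monom X k \<alpha>" using monom_mono[OF _ kn] by blast
    thus ?thesis by simp
  qed
  finally show ?thesis using S by (intro span_I[of "S \<inter> mindices k" _ a]) auto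
qed

theorem theorem1p2:
  fixes A B :: "'a::field_char_0 set" and n :: nat and D :: "'a \<Rightarrow> 'a"
  assumes "is_subring A"
    and "\<rat> \<subseteq> A"
    and "\<exists>X. coord_sys A B n X"
    and "is_lnd A B D"
    and "lnd_rank A B n D = lnd_rank (frac_set A) (loc_set A B) n (frac_ext A B D)"
    and "rigid (frac_set A) (loc_set A B) n (frac_ext A B D)"
  shows "rigid A B n D"
proof -
  note A = assms(1)
  obtain X0 where X0: "coord_sys A B n X0" using assms(3) by blast
  have AB: "A \<subseteq> B" using const_in_span[of _ A X0 n] X0 unfolding coord_sys_def by auto
  define K where "K = frac_set A"
  define L where "L = loc_set A B"
  define DK where "DK = frac_ext A B D"
  define k where "k = n - lnd_rank A B n D"
  have kn: "k \<le> n" unfolding k_def by simp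
  have r6: "rigid K L n DK" using assms(6) unfolding K_def L_def DK_def .
  have r5: "n - lnd_rank K L n DK = k" using assms(5) unfolding K_def L_def DK_def k_def by simp
  have GK: "X \<in> Gamma_D K L n DK" if X: "X \<in> Gamma_D A B n D" for X
  proof -
    have cs: "coord_sys A B n X" and sub: "alg_span A X k \<subseteq> ker_on B D"
      using X unfolding Gamma_D_def k_def by auto
    have "alg_span K X k \<subseteq> ker_on L DK"
    proof
      fix z assume "z \<in> alg_span K X k"
      then obtain b s where bs: "b \<in> alg_span A X k" "s \<in> A" "s \<noteq> 0" "z = b / s"
        using span_frac[OF A] unfolding K_def by blast
      have bB: "b \<in> B" and Db: "D b = 0" using bs(1) sub unfolding ker_on_def by auto
      have "DK z = D b / s"
        unfolding DK_def bs(4) by (rule frac_ext_eq[OF assms(4) AB bB bs(2) bs(3)])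
      hence "DK z = 0" using Db by simp
      moreover have "z \<in> L" unfolding L_def loc_set_def using bs bB by blast
      ultimately show "z \<in> ker_on L DK" unfolding ker_on_def by blast
    qed
    moreover have "coord_sys K L n X" using coord_frac[OF A cs] unfolding K_def L_def .
    ultimately show ?thesis unfolding Gamma_D_def r5 by blast
  qed
  have incl: "alg_span A Y k \<subseteq> alg_span A X k"
    if X: "X \<in> Gamma_D A B n D" and Y: "Y \<in> Gamma_D A B n D" for X Y
  proof
    fix y assume y: "y \<in> alg_span A Y k"
    have "alg_span K X (n - lnd_rank K L n DK) = alg_span K Y (n - lnd_rank K L n DK)"
      using r6 GK[OF X] GK[OF Y] unfolding rigid_def by blast
    hence eq: "alg_span K X k = alg_span K Y k" unfolding r5 .
    have csX: "coord_sys A B n X" and csY: "coord_sys A B n Y"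
      using X Y unfolding Gamma_D_def by auto
    have "alg_span A Y n = B" using csY unfolding coord_sys_def by blast
    hence yB: "y \<in> B" using span_mono_k[OF kn] y by blast
    have "y \<in> alg_span K Y k" using span_A_K[OF A] y unfolding K_def by blast
    hence "y \<in> alg_span (frac_set A) X k" using eq unfolding K_def by simp
    thus "y \<in> alg_span A X k" using key[OF A csX kn yB] by blast
  qed
  have "alg_span A X k = alg_span A Y k"
    if "X \<in> Gamma_D A B n D" "Y \<in> Gamma_D A B n D" for X Y
    using incl[OF that] incl[OF that(2,1)] by (rule subset_antisym[rotated])
  thus ?thesis unfolding rigid_def k_def by blast
qed

end
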